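(* Let $(X,d)$ be a compact metric space and $f_{1,\infty}$ a commutative $m$-periodic sequence of continuous surjective self-maps of $X$. Then $(X,f_{1,\infty})$ is weakly mixing if and only if $(X,f_{1,\infty}^{[k]})$ is weakly mixing for every $k\ge1$.
   Context: Commutative: $f_i\circ f_j=f_j\circ f_i$ for all $i,j$. $m$-periodic: $f_{n+m}=f_n$ for all $n\ge1$. Write $f_n^i=f_{n+i-1}\circ\cdots\circ f_n$, $f_1^n=f_n\circ\cdots\circ f_1$, and $f_{1,\infty}^{[k]}=\{f_{k(n-1)+1}^k\}_{n=1}^\infty$ (whose $n$-fold composition is $f_1^{kn}$). A non-autonomous system $(Y,g_{1,\infty})$ is weakly mixing if for all non-empty open $U_1,U_2,V_1,V_2$ there is $n$ with $g_1^n(U_i)\cap V_i\ne\emptyset$, $i=1,2$. *)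

theory Defs
  imports "HOL-Analysis.Analysis"
begin

text \<open>A non-autonomous system is a sequence of maps indexed from 1: f 1, f 2, ...
  (the value f 0 is irrelevant).\<close>

fun fcomp_from :: "(nat \<Rightarrow> 'a \<Rightarrow> 'a) \<Rightarrow> nat \<Rightarrow> nat \<Rightarrow> 'a \<Rightarrow> 'a" where
  "fcomp_from f i 0 = id"
| "fcomp_from f i (Suc n) = f (i + n) \<circ> fcomp_from f i n"

definition block_sys :: "nat \<Rightarrow> (nat \<Rightarrow> 'a \<Rightarrow> 'a) \<Rightarrow> nat \<Rightarrow> 'a \<Rightarrow> 'a" where
  "block_sys k f n = fcomp_from f (k * (n - 1) + 1) k"

definition commutative_sys :: "'a set \<Rightarrow> (nat \<Rightarrow> 'a \<Rightarrow> 'a) \<Rightarrow> bool" where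
  "commutative_sys X f \<longleftrightarrow> (\<forall>i\<ge>1. \<forall>j\<ge>1. \<forall>x\<in>X. f i (f j x) = f j (f i x))"

definition periodic_sys :: "nat \<Rightarrow> (nat \<Rightarrow> 'a \<Rightarrow> 'a) \<Rightarrow> bool" where
  "periodic_sys m f \<longleftrightarrow> (\<forall>n\<ge>1. f (n + m) = f n)"

definition weakly_mixing_sys :: "'a::topological_space set \<Rightarrow> (nat \<Rightarrow> 'a \<Rightarrow> 'a) \<Rightarrow> bool" where
  "weakly_mixing_sys X g \<longleftrightarrow>
     (\<forall>U1 U2 V1 V2. openin (top_of_set X) U1 \<and> openin (top_of_set X) U2 \<and>
        openin (top_of_set X) V1 \<and> openin (top_of_set X) V2 \<and>
        U1 \<noteq> {} \<and> U2 \<noteq> {} \<and> V1 \<noteq> {} \<and> V2 \<noteq> {} \<longrightarrow>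
        (\<exists>n\<ge>1. fcomp_from g 1 n ` U1 \<inter> V1 \<noteq> {} \<and> fcomp_from g 1 n ` U2 \<inter> V2 \<noteq> {}))"

end

theory Submission
  imports Defs
begin

lemma fcomp_split: "fcomp_from f i (a + b) = fcomp_from f (i + a) b \<circ> fcomp_from f i a"
  by (induction b) (auto simp: add.assoc)

lemma fcomp_cong: "(\<And>t. t < j \<Longrightarrow> f (a + t) = f (b + t)) \<Longrightarrow> fcomp_from f a j = fcomp_from f b j"
  by (induction j) auto

lemma block_comp: "fcomp_from (block_sys k f) 1 n = fcomp_from f 1 (k * n)"
proof (induction n)
  case (Suc n)
  have "fcomp_from f 1 (k * Suc n) = fcomp_from f (1 + k*n) k \<circ> fcomp_from f 1 (k*n)"
    using fcomp_split[of f 1 "k*n" k] by (simp add: algebra_simps)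
  then show ?case using Suc by (simp add: block_sys_def algebra_simps)
qed simp

lemma periodic_shift:
  assumes "periodic_sys m f" "i \<ge> 1" shows "f (i + m * q) = f i"
proof (induction q)
  case (Suc q)
  have "f (i + m * Suc q) = f ((i + m*q) + m)" by (simp add: algebra_simps)
  also have "\<dots> = f (i + m*q)" using assms unfolding periodic_sys_def by auto
  finally show ?case using Suc by simp
qed simp

lemma fcomp_periodic:
  assumes "periodic_sys m f"
  shows "fcomp_from f (n + 1) j = fcomp_from f (n mod m + 1) j"
proof (rule fcomp_cong)
  fix t
  have "n + 1 + t = (n mod m + 1 + t) + m * (n div m)" by simp
  then show "f (n + 1 + t) = f (n mod m + 1 + t)"
    using periodic_shift[OF assms, of "n mod m + 1 + t" "n div m"] by simp
qed

definition good :: "'b::topological_space set \<Rightarrow> 'b set \<times> 'b set \<Rightarrow> bool" where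
  "good X p \<longleftrightarrow> openin (top_of_set X) (fst p) \<and> openin (top_of_set X) (snd p) \<and> fst p \<noteq> {} \<and> snd p \<noteq> {}"

definition Ns :: "(nat \<Rightarrow> 'b \<Rightarrow> 'b) \<Rightarrow> 'b set \<times> 'b set \<Rightarrow> nat set" where
  "Ns f p = {n. 1 \<le> n \<and> fcomp_from f 1 n ` fst p \<inter> snd p \<noteq> {}}"

context
  fixes X :: "'a::metric_space set" and f :: "nat \<Rightarrow> 'a \<Rightarrow> 'a"
  assumes cont: "\<And>n. n \<ge> 1 \<Longrightarrow> continuous_on X (f n)"
    and surj: "\<And>n. n \<ge> 1 \<Longrightarrow> f n ` X = X"
    and comm: "commutative_sys X f"
begin

lemma fc_surj: "a \<ge> 1 \<Longrightarrow> fcomp_from f a n ` X = X"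
proof (induction n)
  case (Suc n)
  have "fcomp_from f a (Suc n) ` X = f (a+n) ` (fcomp_from f a n ` X)"
    by (simp add: image_comp)
  then show ?case using Suc surj[of "a+n"] by simp
qed simp

lemma fc_into: "a \<ge> 1 \<Longrightarrow> x \<in> X \<Longrightarrow> fcomp_from f a n x \<in> X"
  using fc_surj by blast

lemma fc_cont: "a \<ge> 1 \<Longrightarrow> continuous_on X (fcomp_from f a n)"
proof (induction n)
  case 0 then show ?case by (simp add: continuous_on_id)
  case (Suc n)
  then show ?case
    using continuous_on_compose[OF Suc.IH[OF Suc.prems], of "f (a+n)"] cont[of "a+n"] fc_surj[OF Suc.prems, of n]
    by simp
qed

lemma comm1: "x \<in> X \<Longrightarrow> i \<ge> 1 \<Longrightarrow> a \<ge> 1 \<Longrightarrow> f i (fcomp_from f a n x) = fcomp_from f a n (f i x)"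
proof (induction n)
  case (Suc n)
  have "f i (f (a+n) (fcomp_from f a n x)) = f (a+n) (f i (fcomp_from f a n x))"
    using comm Suc.prems fc_into unfolding commutative_sys_def by auto
  then show ?case using Suc by simp
qed simp

lemma comm2: "x \<in> X \<Longrightarrow> a \<ge> 1 \<Longrightarrow> b \<ge> 1 \<Longrightarrow>
   fcomp_from f a n (fcomp_from f b p x) = fcomp_from f b p (fcomp_from f a n x)"
proof (induction n)
  case (Suc n)
  have "f (a+n) (fcomp_from f b p (fcomp_from f a n x)) = fcomp_from f b p (f (a+n) (fcomp_from f a n x))"
    using comm1[of "fcomp_from f a n x" "a+n" b p] fc_into Suc.prems by auto
  then show ?case using Suc by simp
qed simp

lemma pre_open: "a \<ge> 1 \<Longrightarrow> openin (top_of_set X) V \<Longrightarrow> openin (top_of_set X) {x\<in>X. fcomp_from f a j x \<in> V}"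
proof -
  assume a: "a \<ge> 1" and V: "openin (top_of_set X) V"
  have "fcomp_from f a j \<in> X \<rightarrow> X" using fc_into a by blast
  then have "openin (top_of_set X) (X \<inter> fcomp_from f a j -` V)"
    using continuous_on_open_gen fc_cont[OF a] V by blast
  moreover have "X \<inter> fcomp_from f a j -` V = {x\<in>X. fcomp_from f a j x \<in> V}" by auto
  ultimately show ?thesis by simp
qed

lemma pre_ne: "a \<ge> 1 \<Longrightarrow> openin (top_of_set X) V \<Longrightarrow> V \<noteq> {} \<Longrightarrow> {x\<in>X. fcomp_from f a j x \<in> V} \<noteq> {}"
proof -
  assume a: "a \<ge> 1" and V: "openin (top_of_set X) V" "V \<noteq> {}"
  then obtain y where "y \<in> V" by blast
  then have "y \<in> X" using openin_imp_subset[OF V(1)] by blast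
  then have "y \<in> fcomp_from f a j ` X" using fc_surj[OF a, of j] by simp
  then obtain x where "x \<in> X" "fcomp_from f a j x = y" by (elim imageE) simp
  then show ?thesis using \<open>y \<in> V\<close> by blast
qed

lemma merge:
  assumes wm: "weakly_mixing_sys X f" and g1: "good X (U1,V1)" and g2: "good X (U2,V2)"
  shows "\<exists>p. good X p \<and> Ns f p \<subseteq> Ns f (U1,V1) \<inter> Ns f (U2,V2)"
proof -
  let ?F = "fcomp_from f 1"
  obtain n where n: "n \<ge> 1" "?F n ` U1 \<inter> U2 \<noteq> {}" "?F n ` V1 \<inter> V2 \<noteq> {}"
    using wm g1 g2 unfolding weakly_mixing_sys_def good_def by (metis fst_conv snd_conv)
  have sX: "U1 \<subseteq> X" "V1 \<subseteq> X" using g1 unfolding good_def by (auto dest: openin_imp_subset)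
  define U where "U = U1 \<inter> {x\<in>X. ?F n x \<in> U2}"
  define V where "V = V1 \<inter> {x\<in>X. ?F n x \<in> V2}"
  have "good X (U,V)"
    unfolding good_def U_def V_def using g1 g2 n sX pre_open[of 1 U2 n] pre_open[of 1 V2 n]
    unfolding good_def by (auto intro!: openin_Int)
  moreover have "Ns f (U,V) \<subseteq> Ns f (U1,V1) \<inter> Ns f (U2,V2)"
  proof
    fix k assume "k \<in> Ns f (U,V)"
    then obtain x where x: "k \<ge> 1" "x \<in> U" "?F k x \<in> V" unfolding Ns_def by auto
    have "k \<in> Ns f (U1,V1)" using x unfolding Ns_def U_def V_def by auto
    moreover have "?F k (?F n x) = ?F n (?F k x)" using comm2[of x 1 1 k n] x U_def by auto
    then have "k \<in> Ns f (U2,V2)" using x unfolding Ns_def U_def V_def by force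
    ultimately show "k \<in> Ns f (U1,V1) \<inter> Ns f (U2,V2)" by blast
  qed
  ultimately show ?thesis by blast
qed

lemma finite_family:
  assumes wm: "weakly_mixing_sys X f" and fin: "finite S" and ne: "X \<noteq> {}"
  shows "(\<forall>p\<in>S. good X p) \<longrightarrow> (\<exists>q. good X q \<and> Ns f q \<subseteq> (\<Inter>p\<in>S. Ns f p))"
  using fin
proof (induction S rule: finite_induct)
  case empty
  have "good X (X,X)" unfolding good_def using ne by auto
  then show ?case by blast
next
  case (insert p S)
  show ?case
  proof
    assume a: "\<forall>p\<in>insert p S. good X p"
    then obtain q where q: "good X q" "Ns f q \<subseteq> (\<Inter>p\<in>S. Ns f p)" using insert.IH by blast
    obtain r where "good X r" "Ns f r \<subseteq> Ns f q \<inter> Ns f p"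
      using merge[OF wm, of "fst q" "snd q" "fst p" "snd p"] q a by auto
    then show "\<exists>q. good X q \<and> Ns f q \<subseteq> (\<Inter>p\<in>insert p S. Ns f p)" using q by blast
  qed
qed

end


theorem mainTheorem12:
  fixes X :: "'a::metric_space set" and f :: "nat \<Rightarrow> 'a \<Rightarrow> 'a" and m :: nat
  assumes "compact X"
    and "\<And>n. n \<ge> 1 \<Longrightarrow> continuous_on X (f n)"
    and "\<And>n. n \<ge> 1 \<Longrightarrow> f n ` X = X"
    and "commutative_sys X f"
    and "m \<ge> 1"
    and "periodic_sys m f"
  shows "weakly_mixing_sys X f \<longleftrightarrow> (\<forall>k\<ge>1. weakly_mixing_sys X (block_sys k f))"
proof
  assume wm: "weakly_mixing_sys X f"
  show "\<forall>k\<ge>1. weakly_mixing_sys X (block_sys k f)"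
  proof (intro allI impI)
    fix k :: nat assume k: "k \<ge> 1"
    show "weakly_mixing_sys X (block_sys k f)"
      unfolding weakly_mixing_sys_def block_comp
    proof (intro allI impI)
      fix U1 U2 V1 V2
      assume H: "openin (top_of_set X) U1 \<and> openin (top_of_set X) U2 \<and>
        openin (top_of_set X) V1 \<and> openin (top_of_set X) V2 \<and>
        U1 \<noteq> {} \<and> U2 \<noteq> {} \<and> V1 \<noteq> {} \<and> V2 \<noteq> {}"
      then have ne: "X \<noteq> {}" using openin_imp_subset by blast
      define pre where "pre r j V = {x\<in>X. fcomp_from f (r+1) j x \<in> V}" for r j V
      define S where "S = (\<lambda>(r,j). (U1, pre r j V1)) ` ({..<m} \<times> {..<k}) \<union> (\<lambda>(r,j). (U2, pre r j V2)) ` ({..<m} \<times> {..<k})"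
      have fin: "finite S" unfolding S_def by auto
      have po: "\<And>r j V. openin (top_of_set X) V \<Longrightarrow> openin (top_of_set X) (pre r j V)"
        unfolding pre_def using pre_open[OF assms(2) assms(3) assms(4)] by simp
      have pn: "\<And>r j V. openin (top_of_set X) V \<Longrightarrow> V \<noteq> {} \<Longrightarrow> pre r j V \<noteq> {}"
        unfolding pre_def using pre_ne[OF assms(2) assms(3) assms(4)] by simp
      have g12: "\<And>r j. good X (U1, pre r j V1) \<and> good X (U2, pre r j V2)"
        unfolding good_def fst_conv snd_conv using H po pn by blast
      have allgood: "\<forall>p\<in>S. good X p" unfolding S_def using g12 by auto
      obtain q where q: "good X q" "Ns f q \<subseteq> (\<Inter>p\<in>S. Ns f p)"
        using finite_family[OF assms(2) assms(3) assms(4) wm fin ne] allgood by blast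
      have "\<exists>n\<ge>1. fcomp_from f 1 n ` fst q \<inter> snd q \<noteq> {}"
        using wm[unfolded weakly_mixing_sys_def, rule_format, of "fst q" "fst q" "snd q" "snd q"] q(1)
        unfolding good_def by blast
      then obtain n where n1: "n \<ge> 1" and n: "n \<in> Ns f q" unfolding Ns_def by auto
      have hitS: "\<And>p. p \<in> S \<Longrightarrow> n \<in> Ns f p" using q n by blast
      define r where "r = n mod m"
      define j where "j = (k - n mod k) mod k"
      have rm: "r < m" unfolding r_def using assms(5) by simp
      have jk: "j < k" unfolding j_def using k by simp
      have "k dvd n + j"
      proof (cases "n mod k = 0")
        case True then show ?thesis unfolding j_def by auto
      next
        case False
        have lt: "n mod k < k" using k by simp
        have le: "n mod k \<le> n" by simp
        have j: "j = k - n mod k" using False lt unfolding j_def by simp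
        have "n + j = (n - n mod k) + k" using j lt le by linarith
        also have "\<dots> = k * (n div k) + k" by (simp add: minus_mod_eq_mult_div)
        finally show ?thesis by simp
      qed
      then obtain N where N: "n + j = k * N" by blast
      have N1: "N \<ge> 1" using N n1 by (cases N) auto
      have key: "\<And>U V. (U, pre r j V) \<in> S \<Longrightarrow> fcomp_from f 1 (k * N) ` U \<inter> V \<noteq> {}"
      proof -
        fix U V assume "(U, pre r j V) \<in> S"
        then have "n \<in> Ns f (U, pre r j V)" by (rule hitS)
        then obtain x where x: "x \<in> U" "fcomp_from f 1 n x \<in> pre r j V" unfolding Ns_def by auto
        then have "fcomp_from f (n+1) j (fcomp_from f 1 n x) \<in> V"
          unfolding pre_def r_def fcomp_periodic[OF assms(6), of n j] by simp
        moreover have "fcomp_from f 1 (n+j) x = fcomp_from f (n+1) j (fcomp_from f 1 n x)"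
          using fcomp_split[of f 1 n j] by simp
        ultimately show "fcomp_from f 1 (k * N) ` U \<inter> V \<noteq> {}" using x(1) N by auto
      qed
      have m1: "(U1, pre r j V1) \<in> S" unfolding S_def
        by (rule UnI1, rule image_eqI[where x="(r,j)"]) (simp_all add: rm jk)
      have m2: "(U2, pre r j V2) \<in> S" unfolding S_def
        by (rule UnI2, rule image_eqI[where x="(r,j)"]) (simp_all add: rm jk)
      show "\<exists>n\<ge>1. fcomp_from f 1 (k * n) ` U1 \<inter> V1 \<noteq> {} \<and> fcomp_from f 1 (k * n) ` U2 \<inter> V2 \<noteq> {}"
        using key[OF m1] key[OF m2] N1 by blast
    qed
  qed
next
  assume "\<forall>k\<ge>1. weakly_mixing_sys X (block_sys k f)"
  then have "weakly_mixing_sys X (block_sys 1 f)" by simp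
  then show "weakly_mixing_sys X f" unfolding weakly_mixing_sys_def block_comp by simp
qed

end
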